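(* Let $\sigma$ be an automorphism of $D$, let $B$ be a subring of $D$ such that $D$ is a free right $B$-module of finite rank, and let $f\in D[t;\sigma,\delta]$ be monic of degree $m\ge2$ and $B$-weak semi-invariant. Then $S_f$ is a division algebra if and only if $f$ is irreducible. In particular, if $\sigma$ is an automorphism of $D$ and $f$ is right semi-invariant, then $S_f$ is a division algebra if and only if $f$ is irreducible.
   Context: $D$ is an associative division ring, $\sigma$ a ring endomorphism of $D$, $\delta$ a left $\sigma$-derivation. $D[t;\sigma,\delta]$ is the skew polynomial ring with $ta=\sigma(a)t+\delta(a)$. For monic $f$ of degree $m$, $S_f$ is the set of polynomials of degree $<m$ with multiplication $g\circ h=$ remainder of $gh$ upon right division by $f$. $f$ is $B$-weak semi-invariant if $fB\subseteq Df$, and right semi-invariant if $fD\subseteq Df$. $f$ is irreducible if it is not a unit and has no factorization $f=gh$ with $\deg g,\deg h<\deg f$. $S_f$ is a division algebra if left and right multiplication by every nonzero element are bijective. *)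

theory Defs
  imports "HOL-Computational_Algebra.Polynomial"
begin

(* Elements are represented by their coefficient sequences as 'a poly
   (p = sum_i coeff p i * t^i, coefficients on the LEFT); only the additive
   structure, coeff, degree and lead_coeff of the library type are used.
   The (noncommutative) multiplication is defined below via t a = sigma(a) t + delta(a). *)

definition ring_endo :: "('a::division_ring \<Rightarrow> 'a) \<Rightarrow> bool" where
  "ring_endo \<sigma> \<longleftrightarrow> (\<forall>a b. \<sigma> (a + b) = \<sigma> a + \<sigma> b) \<and> (\<forall>a b. \<sigma> (a * b) = \<sigma> a * \<sigma> b) \<and> \<sigma> 1 = 1"

definition ring_auto :: "('a::division_ring \<Rightarrow> 'a) \<Rightarrow> bool" where
  "ring_auto \<sigma> \<longleftrightarrow> ring_endo \<sigma> \<and> bij \<sigma>"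

definition left_sigma_derivation :: "('a::division_ring \<Rightarrow> 'a) \<Rightarrow> ('a \<Rightarrow> 'a) \<Rightarrow> bool" where
  "left_sigma_derivation \<sigma> \<delta> \<longleftrightarrow> (\<forall>a b. \<delta> (a + b) = \<delta> a + \<delta> b) \<and>
      (\<forall>a b. \<delta> (a * b) = \<sigma> a * \<delta> b + \<delta> a * b)"

definition skew_tmul :: "('a::division_ring \<Rightarrow> 'a) \<Rightarrow> ('a \<Rightarrow> 'a) \<Rightarrow> 'a poly \<Rightarrow> 'a poly" where
  "skew_tmul \<sigma> \<delta> p = pCons 0 (map_poly \<sigma> p) + map_poly \<delta> p"

definition skew_lscal :: "'a::division_ring \<Rightarrow> 'a poly \<Rightarrow> 'a poly" where
  "skew_lscal c p = map_poly (\<lambda>x. c * x) p"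

text \<open>right multiplication by t^j\<close>
definition skew_shift :: "nat \<Rightarrow> 'a::division_ring poly \<Rightarrow> 'a poly" where
  "skew_shift j p = (pCons 0 ^^ j) p"

text \<open>product in D[t;sigma,delta]: (sum_i p_i t^i)(sum_j q_j t^j) = sum_{i,j} p_i (t^i q_j) t^j\<close>
definition skew_mult :: "('a::division_ring \<Rightarrow> 'a) \<Rightarrow> ('a \<Rightarrow> 'a) \<Rightarrow> 'a poly \<Rightarrow> 'a poly \<Rightarrow> 'a poly" where
  "skew_mult \<sigma> \<delta> p q =
     (\<Sum>i\<le>degree p. \<Sum>j\<le>degree q.
        skew_shift j (skew_lscal (coeff p i) ((skew_tmul \<sigma> \<delta> ^^ i) [:coeff q j:])))"

definition skew_unit :: "('a::division_ring \<Rightarrow> 'a) \<Rightarrow> ('a \<Rightarrow> 'a) \<Rightarrow> 'a poly \<Rightarrow> bool" where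
  "skew_unit \<sigma> \<delta> f \<longleftrightarrow> (\<exists>g. skew_mult \<sigma> \<delta> g f = [:1:] \<and> skew_mult \<sigma> \<delta> f g = [:1:])"

definition skew_irreducible :: "('a::division_ring \<Rightarrow> 'a) \<Rightarrow> ('a \<Rightarrow> 'a) \<Rightarrow> 'a poly \<Rightarrow> bool" where
  "skew_irreducible \<sigma> \<delta> f \<longleftrightarrow> \<not> skew_unit \<sigma> \<delta> f \<and>
     \<not> (\<exists>g h. f = skew_mult \<sigma> \<delta> g h \<and> degree g < degree f \<and> degree h < degree f)"

definition skew_rmod :: "('a::division_ring \<Rightarrow> 'a) \<Rightarrow> ('a \<Rightarrow> 'a) \<Rightarrow> 'a poly \<Rightarrow> 'a poly \<Rightarrow> 'a poly" where
  "skew_rmod \<sigma> \<delta> p f = (THE r. degree r < degree f \<and> (\<exists>q. p = skew_mult \<sigma> \<delta> q f + r))"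

definition Sf_carrier :: "'a::division_ring poly \<Rightarrow> 'a poly set" where
  "Sf_carrier f = {g. degree g < degree f}"

definition Sf_mult :: "('a::division_ring \<Rightarrow> 'a) \<Rightarrow> ('a \<Rightarrow> 'a) \<Rightarrow> 'a poly \<Rightarrow> 'a poly \<Rightarrow> 'a poly \<Rightarrow> 'a poly" where
  "Sf_mult \<sigma> \<delta> f g h = skew_rmod \<sigma> \<delta> (skew_mult \<sigma> \<delta> g h) f"

definition Sf_division_algebra :: "('a::division_ring \<Rightarrow> 'a) \<Rightarrow> ('a \<Rightarrow> 'a) \<Rightarrow> 'a poly \<Rightarrow> bool" where
  "Sf_division_algebra \<sigma> \<delta> f \<longleftrightarrow>
     (\<forall>g \<in> Sf_carrier f. g \<noteq> 0 \<longrightarrow>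
        bij_betw (\<lambda>h. Sf_mult \<sigma> \<delta> f g h) (Sf_carrier f) (Sf_carrier f) \<and>
        bij_betw (\<lambda>h. Sf_mult \<sigma> \<delta> f h g) (Sf_carrier f) (Sf_carrier f))"

definition monic_skew :: "'a::division_ring poly \<Rightarrow> bool" where
  "monic_skew f \<longleftrightarrow> lead_coeff f = 1"

definition subring :: "'a::division_ring set \<Rightarrow> bool" where
  "subring B \<longleftrightarrow> 1 \<in> B \<and> (\<forall>a\<in>B. \<forall>b\<in>B. a + b \<in> B \<and> a - b \<in> B \<and> a * b \<in> B)"

definition free_right_module_fin_rank :: "'a::division_ring set \<Rightarrow> bool" where
  "free_right_module_fin_rank B \<longleftrightarrow>
     (\<exists>(n::nat) (b::nat \<Rightarrow> 'a). \<forall>d::'a. \<exists>!c::nat \<Rightarrow> 'a.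
        (\<forall>i<n. c i \<in> B) \<and> (\<forall>i\<ge>n. c i = 0) \<and> d = (\<Sum>i<n. b i * c i))"

definition weak_semi_invariant :: "('a::division_ring \<Rightarrow> 'a) \<Rightarrow> ('a \<Rightarrow> 'a) \<Rightarrow> 'a set \<Rightarrow> 'a poly \<Rightarrow> bool" where
  "weak_semi_invariant \<sigma> \<delta> B f \<longleftrightarrow>
     (\<forall>b\<in>B. \<exists>d. skew_mult \<sigma> \<delta> f [:b:] = skew_mult \<sigma> \<delta> [:d:] f)"

definition right_semi_invariant :: "('a::division_ring \<Rightarrow> 'a) \<Rightarrow> ('a \<Rightarrow> 'a) \<Rightarrow> 'a poly \<Rightarrow> bool" where
  "right_semi_invariant \<sigma> \<delta> f \<longleftrightarrow> weak_semi_invariant \<sigma> \<delta> UNIV f"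

end

theory Submission
  imports Defs
begin


lemma lscal_coeff[simp]: "coeff (skew_lscal c p) n = c * coeff p n"
  by (simp add: skew_lscal_def coeff_map_poly)

lemma lscal_add: "skew_lscal c (p + q) = skew_lscal c p + skew_lscal c q"
  by (rule poly_eqI) (simp add: distrib_left)
lemma lscal_add2: "skew_lscal (a + b) p = skew_lscal a p + skew_lscal b p"
  by (rule poly_eqI) (simp add: distrib_right)
lemma lscal_0[simp]: "skew_lscal c 0 = 0" "skew_lscal 0 p = 0"
  by (rule poly_eqI, simp)+
lemma lscal_1[simp]: "skew_lscal 1 p = p"
  by (rule poly_eqI, simp)
lemma lscal_lscal: "skew_lscal a (skew_lscal b p) = skew_lscal (a*b) p"
  by (rule poly_eqI) (simp add: mult.assoc)
lemma lscal_pCons: "skew_lscal c (pCons a p) = pCons (c*a) (skew_lscal c p)"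
  by (rule poly_eqI) (simp add: coeff_pCons split: nat.splits)
lemma lscal_minus: "skew_lscal c (p - q) = skew_lscal c p - skew_lscal c q"
  by (rule poly_eqI) (simp add: right_diff_distrib)
lemma lscal_uminus: "skew_lscal c (- q) = - skew_lscal c q"
  by (rule poly_eqI) simp
lemma lscal_sum: "skew_lscal c (sum g A) = (\<Sum>x\<in>A. skew_lscal c (g x))"
  by (rule poly_eqI) (simp add: coeff_sum sum_distrib_left)
lemma degree_lscal_le: "degree (skew_lscal c p) \<le> degree p"
  by (rule degree_le) (simp add: coeff_eq_0)
lemma degree_lscal: "c \<noteq> 0 \<Longrightarrow> degree (skew_lscal c p) = degree p"
  by (rule antisym[OF degree_lscal_le]) (metis le_degree lscal_coeff leading_coeff_0_iff mult_eq_0_iff degree_0 le0)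

lemma poly_monoms: "(\<Sum>i\<le>degree (p::'a::division_ring poly). monom (coeff p i) i) = p"
  by (rule poly_as_sum_of_monoms)

locale skew =
  fixes \<sigma> \<delta> :: "'a::division_ring \<Rightarrow> 'a"
  assumes endo: "ring_endo \<sigma>" and injs: "inj \<sigma>" and der: "left_sigma_derivation \<sigma> \<delta>"
begin

abbreviation "T \<equiv> skew_tmul \<sigma> \<delta>"
abbreviation "mm \<equiv> skew_mult \<sigma> \<delta>"

lemma s_add: "\<sigma> (a + b) = \<sigma> a + \<sigma> b" using endo unfolding ring_endo_def by blast
lemma s_mult: "\<sigma> (a * b) = \<sigma> a * \<sigma> b" using endo unfolding ring_endo_def by blast
lemma s_1[simp]: "\<sigma> 1 = 1" using endo unfolding ring_endo_def by blast
lemma s_0[simp]: "\<sigma> 0 = 0" using s_add[of 0 0] by simp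
lemma s_eq0[simp]: "\<sigma> a = 0 \<longleftrightarrow> a = 0" using injs s_0 by (metis injD)
lemma d_add: "\<delta> (a + b) = \<delta> a + \<delta> b" using der unfolding left_sigma_derivation_def by blast
lemma d_mult: "\<delta> (a * b) = \<sigma> a * \<delta> b + \<delta> a * b" using der unfolding left_sigma_derivation_def by blast
lemma d_0[simp]: "\<delta> 0 = 0" using d_add[of 0 0] by simp
lemma d_1[simp]: "\<delta> 1 = 0" using d_mult[of 1 1] by simp

lemma T_coeff0[simp]: "coeff (T p) 0 = \<delta> (coeff p 0)"
  by (simp add: skew_tmul_def coeff_map_poly)
lemma T_coeffS[simp]: "coeff (T p) (Suc n) = \<sigma> (coeff p n) + \<delta> (coeff p (Suc n))"
  by (simp add: skew_tmul_def coeff_map_poly)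
lemma T_coeff: "coeff (T p) n = (case n of 0 \<Rightarrow> \<delta> (coeff p 0) | Suc k \<Rightarrow> \<sigma> (coeff p k) + \<delta> (coeff p n))"
  by (cases n) auto
lemma T_add: "T (p + q) = T p + T q"
  by (rule poly_eqI) (simp add: T_coeff s_add d_add split: nat.splits)
lemma T_0[simp]: "T 0 = 0"
  by (rule poly_eqI) (simp add: T_coeff split: nat.splits)
lemma T_pCons0: "T (pCons 0 p) = pCons 0 (T p)"
  by (rule poly_eqI) (simp add: T_coeff coeff_pCons split: nat.splits)
lemma T_lscal: "T (skew_lscal c p) = skew_lscal (\<sigma> c) (T p) + skew_lscal (\<delta> c) p"
  by (rule poly_eqI) (simp add: T_coeff s_mult d_mult distrib_left add_ac split: nat.splits)
lemma T_pCons: "T (pCons a p) = pCons (\<delta> a) ([:\<sigma> a:] + T p)"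
  by (rule poly_eqI) (simp add: T_coeff coeff_pCons split: nat.splits)

lemma Tpow_add: "(T ^^ i) (p + q) = (T ^^ i) p + (T ^^ i) q"
  by (induction i) (simp_all add: T_add)
lemma Tpow_0[simp]: "(T ^^ i) 0 = 0"
  by (induction i) simp_all
lemma Tpow_pCons0: "(T ^^ i) (pCons 0 p) = pCons 0 ((T ^^ i) p)"
  by (induction i) (simp_all add: T_pCons0)
lemma Tpow_shift: "(T ^^ i) (skew_shift j p) = skew_shift j ((T ^^ i) p)"
  unfolding skew_shift_def by (induction j) (simp_all add: Tpow_pCons0)
lemma lscal_shift: "skew_lscal c (skew_shift j p) = skew_shift j (skew_lscal c p)"
  unfolding skew_shift_def by (induction j) (simp_all add: lscal_pCons)
lemma shift_const: "skew_shift j [:a:] = monom a j"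
  unfolding skew_shift_def by (induction j) (simp_all add: monom_0 monom_Suc)
lemma Tpow_sum: "(T ^^ i) (sum g A) = (\<Sum>x\<in>A. (T ^^ i) (g x))"
  by (rule sum_comp_morphism[symmetric, unfolded o_def]) (simp_all add: Tpow_add)

lemma mm_def2: "mm p q = (\<Sum>i\<le>degree p. skew_lscal (coeff p i) ((T ^^ i) q))"
proof -
  have "mm p q = (\<Sum>i\<le>degree p. \<Sum>j\<le>degree q. skew_lscal (coeff p i) ((T ^^ i) (monom (coeff q j) j)))"
    unfolding skew_mult_def by (simp add: lscal_shift[symmetric] Tpow_shift[symmetric] shift_const)
  also have "\<dots> = (\<Sum>i\<le>degree p. skew_lscal (coeff p i) ((T ^^ i) q))"
    by (simp add: lscal_sum[symmetric] Tpow_sum[symmetric] poly_monoms)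
  finally show ?thesis .
qed

lemma mm_bound: "degree p \<le> N \<Longrightarrow> mm p q = (\<Sum>i\<le>N. skew_lscal (coeff p i) ((T ^^ i) q))"
  unfolding mm_def2 by (rule sum.mono_neutral_left) (auto simp: coeff_eq_0)

lemma mm_0_left[simp]: "mm 0 q = 0" by (simp add: mm_def2)
lemma mm_pCons: "mm (pCons a p) q = skew_lscal a q + mm p (T q)"
proof -
  have "mm (pCons a p) q = (\<Sum>i\<le>Suc (degree p). skew_lscal (coeff (pCons a p) i) ((T ^^ i) q))"
    by (rule mm_bound) (simp add: degree_pCons_le)
  also have "\<dots> = skew_lscal a q + (\<Sum>i\<le>degree p. skew_lscal (coeff p i) ((T ^^ i) (T q)))"
    by (subst sum.atMost_Suc_shift) (simp add: funpow_swap1)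
  finally show ?thesis by (simp add: mm_def2)
qed
lemma mm_const: "mm [:c:] q = skew_lscal c q"
  using mm_pCons[of c 0 q] by simp

lemma mm_add_right: "mm p (q1 + q2) = mm p q1 + mm p q2"
  by (induction p arbitrary: q1 q2) (simp_all add: mm_pCons lscal_add T_add add_ac)
lemma mm_0_right[simp]: "mm p 0 = 0"
  by (induction p) (simp_all add: mm_pCons)
lemma mm_add_left: "mm (p1 + p2) q = mm p1 q + mm p2 q"
proof (induction p1 arbitrary: p2 q)
  case 0 then show ?case by simp
next
  case (pCons a p1)
  obtain b p2' where p2: "p2 = pCons b p2'" by (cases p2) auto
  show ?case unfolding p2 by (simp add: mm_pCons lscal_add2 pCons.IH add_ac)
qed
lemma mm_uminus_left: "mm (- p) q = - mm p q"
  using mm_add_left[of p "-p" q] by (simp add: eq_neg_iff_add_eq_0 add.commute)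
lemma mm_uminus_right: "mm p (- q) = - mm p q"
  using mm_add_right[of p q "-q"] by (simp add: eq_neg_iff_add_eq_0 add.commute)
lemma mm_diff_left: "mm (p1 - p2) q = mm p1 q - mm p2 q"
  using mm_add_left[of p1 "-p2" q] by (simp add: mm_uminus_left)
lemma mm_diff_right: "mm p (q1 - q2) = mm p q1 - mm p q2"
  using mm_add_right[of p q1 "-q2"] by (simp add: mm_uminus_right)
lemma mm_lscal_left: "mm (skew_lscal c p) q = skew_lscal c (mm p q)"
  by (induction p arbitrary: q) (simp_all add: mm_pCons lscal_pCons lscal_add lscal_lscal)
lemma T_mm: "T (mm p q) = mm (T p) q"
proof (induction p arbitrary: q)
  case 0 then show ?case by simp
next
  case (pCons a p)
  show ?case by (simp add: mm_pCons T_pCons T_add T_lscal pCons.IH mm_add_left mm_const add_ac)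
qed
lemma mm_assoc: "mm (mm p q) r = mm p (mm q r)"
  by (induction p arbitrary: q) (simp_all add: mm_pCons mm_add_left mm_lscal_left T_mm)
lemma lscal_T_comm: "skew_lscal c (pCons 0 p) = pCons 0 (skew_lscal c p)"
  by (simp add: lscal_pCons)
lemma mm_pCons0_right: "mm p (pCons 0 q) = pCons 0 (mm p q)"
  by (induction p arbitrary: q) (simp_all add: mm_pCons lscal_pCons T_pCons0)
lemma T_one: "T [:1:] = pCons 0 [:1:]"
  by (rule poly_eqI) (simp add: T_coeff coeff_pCons split: nat.splits)
lemma mm_one_right[simp]: "mm p [:1:] = p"
  by (induction p) (simp_all add: mm_pCons T_one mm_pCons0_right poly_eq_iff coeff_pCons lscal_pCons split: nat.splits)
lemma mm_one_left[simp]: "mm [:1:] p = p"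
  by (simp add: mm_const)

lemma T_deg: "p \<noteq> 0 \<Longrightarrow> degree (T p) = Suc (degree p) \<and> coeff (T p) (Suc (degree p)) = \<sigma> (lead_coeff p)"
proof -
  assume p: "p \<noteq> 0"
  have c: "coeff (T p) (Suc (degree p)) = \<sigma> (lead_coeff p)" by (simp add: coeff_eq_0)
  have "degree (T p) \<le> Suc (degree p)"
    by (rule degree_le) (auto simp: T_coeff coeff_eq_0 split: nat.splits)
  moreover have "Suc (degree p) \<le> degree (T p)" using p c by (intro le_degree) simp
  ultimately show ?thesis using c by simp
qed

lemma mm_deg: "lead_coeff f = 1 \<Longrightarrow> q \<noteq> 0 \<Longrightarrow> degree (mm q f) = degree q + degree f \<and> lead_coeff (mm q f) = lead_coeff q"
proof (induction q arbitrary: f)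
  case 0 then show ?case by simp
next
  case (pCons a p)
  have f0: "f \<noteq> 0" using pCons.prems by auto
  show ?case
  proof (cases "p = 0")
    case True
    then have a: "a \<noteq> 0" using pCons by auto
    show ?thesis using True a pCons.prems by (simp add: mm_pCons degree_lscal)
  next
    case False
    have Tf: "lead_coeff (T f) = 1" "degree (T f) = Suc (degree f)" using T_deg[OF f0] pCons.prems by auto
    from pCons.IH[OF Tf(1) False] Tf(2)
    have ih: "degree (mm p (T f)) = degree p + Suc (degree f)" "lead_coeff (mm p (T f)) = lead_coeff p" by auto
    have lt: "degree (skew_lscal a f) < degree (mm p (T f))" using degree_lscal_le[of a f] ih by simp
    have d: "degree (skew_lscal a f + mm p (T f)) = degree (mm p (T f))"
      by (rule degree_add_eq_right[OF lt])
    have "coeff (skew_lscal a f) (degree (mm p (T f))) = 0" using lt by (simp add: coeff_eq_0 del: lscal_coeff)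
    then show ?thesis using d ih False by (simp add: mm_pCons degree_pCons_eq)
  qed
qed

lemma division:
  assumes f: "lead_coeff f = 1" "degree f \<ge> 1"
  shows "\<exists>q r. p = mm q f + r \<and> degree r < degree f"
proof (induction "degree p" arbitrary: p rule: less_induct)
  case less
  show ?case
  proof (cases "degree p < degree f")
    case True
    then show ?thesis by (intro exI[of _ 0] exI[of _ p]) simp
  next
    case False
    then have p0: "p \<noteq> 0" using f by auto
    define k where "k = degree p - degree f"
    define c where "c = lead_coeff p"
    have c0: "c \<noteq> 0" using p0 c_def by simp
    have mk: "monom c k \<noteq> 0" "degree (monom c k) = k" "lead_coeff (monom c k) = c"
      using c0 by (simp_all add: degree_monom_eq)
    define g where "g = mm (monom c k) f"
    have g: "degree g = degree p" "lead_coeff g = c"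
      using mm_deg[OF f(1) mk(1)] mk False unfolding g_def k_def by auto
    define p' where "p' = p - g"
    have cp': "coeff p' (degree p) = 0" unfolding p'_def using g c_def by simp
    have dp': "degree p' \<le> degree p" unfolding p'_def using g by (simp add: degree_diff_le)
    show ?thesis
    proof (cases "p' = 0")
      case True
      then show ?thesis using f unfolding p'_def g_def
        by (intro exI[of _ "monom c k"] exI[of _ 0]) simp
    next
      case False
      have "degree p' \<noteq> degree p" using False cp' by (metis leading_coeff_0_iff)
      then have "degree p' < degree p" using dp' by simp
      from less[OF this] obtain q r where qr: "p' = mm q f + r" "degree r < degree f" by blast
      have "p = mm (monom c k + q) f + r" using qr unfolding p'_def g_def
        by (simp add: mm_add_left algebra_simps)
      then show ?thesis using qr(2) by blast
    qed
  qed
qed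

lemma rem_unique:
  assumes f: "lead_coeff f = 1" and eq: "mm q f + r = mm q' f + r'"
    and r: "degree r < degree f" "degree r' < degree f"
  shows "r = r'" "q = q'"
proof -
  have e: "mm (q - q') f = r' - r" using eq by (simp add: mm_diff_left algebra_simps)
  have "degree (r' - r) \<le> max (degree r') (degree r)" by (rule degree_diff_le) simp_all
  then have dr: "degree (r' - r) < degree f" using r by simp
  show "q = q'"
  proof (rule ccontr)
    assume "q \<noteq> q'"
    then have "degree (mm (q - q') f) = degree (q - q') + degree f" using mm_deg[OF f] by simp
    then show False using e dr by simp
  qed
  then show "r = r'" using eq by simp
qed

lemma rmod_eq:
  assumes f: "lead_coeff f = 1" and r: "degree r < degree f" and p: "p = mm q f + r"
  shows "skew_rmod \<sigma> \<delta> p f = r"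
  unfolding skew_rmod_def
proof (rule the_equality)
  show "degree r < degree f \<and> (\<exists>q. p = mm q f + r)" using r p by blast
next
  fix r' assume "degree r' < degree f \<and> (\<exists>q. p = mm q f + r')"
  then obtain q' where "degree r' < degree f" "p = mm q' f + r'" by blast
  then show "r' = r" using rem_unique(1)[OF f _ _ r, of q' r' q] p by simp
qed

lemma rmod_ex:
  assumes f: "lead_coeff f = 1" "degree f \<ge> 1"
  shows "degree (skew_rmod \<sigma> \<delta> p f) < degree f \<and> (\<exists>q. p = mm q f + skew_rmod \<sigma> \<delta> p f)"
proof -
  obtain q r where "p = mm q f + r" "degree r < degree f" using division[OF f] by blast
  with rmod_eq[OF f(1) this(2,1)] show ?thesis by auto
qed

end



locale lin =
  fixes K :: "'s::ab_group_add set" and mul :: "'s \<Rightarrow> 's \<Rightarrow> 's" and one :: 's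
    and V :: "'v::ab_group_add set" and sc :: "'s \<Rightarrow> 'v \<Rightarrow> 'v"
  assumes K0: "0 \<in> K" and K1: "one \<in> K" and one_nz: "one \<noteq> 0"
    and Kadd: "a \<in> K \<Longrightarrow> b \<in> K \<Longrightarrow> a + b \<in> K" and Kuminus: "a \<in> K \<Longrightarrow> - a \<in> K"
    and Kmul: "a \<in> K \<Longrightarrow> b \<in> K \<Longrightarrow> mul a b \<in> K"
    and Kinv: "a \<in> K \<Longrightarrow> a \<noteq> 0 \<Longrightarrow> \<exists>b\<in>K. mul b a = one"
    and V0: "0 \<in> V" and Vadd: "v \<in> V \<Longrightarrow> w \<in> V \<Longrightarrow> v + w \<in> V" and Vuminus: "v \<in> V \<Longrightarrow> - v \<in> V"
    and Vsc: "a \<in> K \<Longrightarrow> v \<in> V \<Longrightarrow> sc a v \<in> V"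
    and sc_addK: "a \<in> K \<Longrightarrow> b \<in> K \<Longrightarrow> v \<in> V \<Longrightarrow> sc (a + b) v = sc a v + sc b v"
    and sc_addV: "a \<in> K \<Longrightarrow> v \<in> V \<Longrightarrow> w \<in> V \<Longrightarrow> sc a (v + w) = sc a v + sc a w"
    and sc_mul: "a \<in> K \<Longrightarrow> b \<in> K \<Longrightarrow> v \<in> V \<Longrightarrow> sc a (sc b v) = sc (mul a b) v"
    and sc_one: "v \<in> V \<Longrightarrow> sc one v = v"
begin

lemma Vdiff: "v \<in> V \<Longrightarrow> w \<in> V \<Longrightarrow> v - w \<in> V"
  using Vadd[of v "-w"] Vuminus[of w] by simp
lemma Vsum: "(\<And>x. x \<in> A \<Longrightarrow> f x \<in> V) \<Longrightarrow> sum f A \<in> V"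
  by (induction A rule: infinite_finite_induct) (auto intro: V0 Vadd)
lemma Ksum: "(\<And>x. x \<in> A \<Longrightarrow> f x \<in> K) \<Longrightarrow> sum f A \<in> K"
  by (induction A rule: infinite_finite_induct) (auto intro: K0 Kadd)
lemma sc_0K[simp]: "v \<in> V \<Longrightarrow> sc 0 v = 0"
  using sc_addK[OF K0 K0, of v] by simp
lemma sc_0V[simp]: "a \<in> K \<Longrightarrow> sc a 0 = 0"
  using sc_addV[OF _ V0 V0, of a] by simp
lemma sc_uminusK: "a \<in> K \<Longrightarrow> v \<in> V \<Longrightarrow> sc (- a) v = - sc a v"
  using sc_addK[of a "-a" v] Kuminus[of a] by (simp add: eq_neg_iff_add_eq_0 add.commute)
lemma sc_uminusV: "a \<in> K \<Longrightarrow> v \<in> V \<Longrightarrow> sc a (- v) = - sc a v"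
  using sc_addV[of a v "-v"] Vuminus[of v] by (simp add: eq_neg_iff_add_eq_0 add.commute)
lemma sc_diffV: "a \<in> K \<Longrightarrow> v \<in> V \<Longrightarrow> w \<in> V \<Longrightarrow> sc a (v - w) = sc a v - sc a w"
  using sc_addV[of a v "-w"] Vuminus[of w] sc_uminusV[of a w] by simp
lemma sc_sumV: "a \<in> K \<Longrightarrow> (\<And>x. x \<in> A \<Longrightarrow> f x \<in> V) \<Longrightarrow> sc a (sum f A) = (\<Sum>x\<in>A. sc a (f x))"
  by (induction A rule: infinite_finite_induct) (auto simp: sc_addV Vsum)
lemma sc_sumK: "v \<in> V \<Longrightarrow> (\<And>x. x \<in> A \<Longrightarrow> f x \<in> K) \<Longrightarrow> sc (sum f A) v = (\<Sum>x\<in>A. sc (f x) v)"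
  by (induction A rule: infinite_finite_induct) (auto simp: sc_addK Ksum)

definition lspan :: "('i \<Rightarrow> 'v) \<Rightarrow> 'i set \<Rightarrow> 'v set" where
  "lspan g I = {v. \<exists>c. (\<forall>i\<in>I. c i \<in> K) \<and> v = (\<Sum>i\<in>I. sc (c i) (g i))}"

definition indep :: "('i \<Rightarrow> 'v) \<Rightarrow> 'i set \<Rightarrow> bool" where
  "indep w J \<longleftrightarrow> (\<forall>d. (\<forall>j\<in>J. d j \<in> K) \<and> (\<Sum>j\<in>J. sc (d j) (w j)) = 0 \<longrightarrow> (\<forall>j\<in>J. d j = 0))"


context
  fixes g :: "'i \<Rightarrow> 'v" and I :: "'i set"
  assumes gV: "\<And>i. i \<in> I \<Longrightarrow> g i \<in> V"
begin

lemma lspan_V: "v \<in> lspan g I \<Longrightarrow> v \<in> V"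
  unfolding lspan_def using gV by (auto intro!: Vsum Vsc)

lemma lspan_0: "0 \<in> lspan g I"
  unfolding lspan_def
proof (intro CollectI exI[of _ "\<lambda>_. 0"] conjI)
  show "\<forall>i\<in>I. (0::'s) \<in> K" using K0 by simp
  show "0 = (\<Sum>i\<in>I. sc 0 (g i))" using gV by (simp add: sum.neutral)
qed

lemma lspan_add: "v \<in> lspan g I \<Longrightarrow> w \<in> lspan g I \<Longrightarrow> v + w \<in> lspan g I"
proof -
  assume "v \<in> lspan g I" "w \<in> lspan g I"
  then obtain c c' where c: "\<forall>i\<in>I. c i \<in> K" "v = (\<Sum>i\<in>I. sc (c i) (g i))"
    and c': "\<forall>i\<in>I. c' i \<in> K" "w = (\<Sum>i\<in>I. sc (c' i) (g i))" unfolding lspan_def by blast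
  have "v + w = (\<Sum>i\<in>I. sc (c i + c' i) (g i))"
    unfolding c c' sum.distrib[symmetric] using c c' gV by (intro sum.cong) (simp_all add: sc_addK)
  then show ?thesis unfolding lspan_def using c c' by (auto intro!: exI[of _ "\<lambda>i. c i + c' i"] Kadd)
qed

lemma lspan_sc: "a \<in> K \<Longrightarrow> v \<in> lspan g I \<Longrightarrow> sc a v \<in> lspan g I"
proof -
  assume a: "a \<in> K" and "v \<in> lspan g I"
  then obtain c where c: "\<forall>i\<in>I. c i \<in> K" "v = (\<Sum>i\<in>I. sc (c i) (g i))" unfolding lspan_def by blast
  have "sc a v = (\<Sum>i\<in>I. sc (mul a (c i)) (g i))"
    unfolding c using a c gV by (subst sc_sumV) (auto intro!: sum.cong Vsc simp: sc_mul)
  then show ?thesis unfolding lspan_def using c a by (auto intro!: exI[of _ "\<lambda>i. mul a (c i)"] Kmul)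
qed

lemma lspan_uminus: "v \<in> lspan g I \<Longrightarrow> - v \<in> lspan g I"
proof -
  assume v: "v \<in> lspan g I"
  have "sc (- one) v = - v" using v lspan_V K1 by (simp add: sc_uminusK sc_one)
  then show ?thesis using lspan_sc[OF Kuminus[OF K1] v] by simp
qed

lemma lspan_diff: "v \<in> lspan g I \<Longrightarrow> w \<in> lspan g I \<Longrightarrow> v - w \<in> lspan g I"
  using lspan_add[of v "-w"] lspan_uminus[of w] by simp

lemma lspan_sum: "(\<And>x. x \<in> A \<Longrightarrow> h x \<in> lspan g I) \<Longrightarrow> sum h A \<in> lspan g I"
  by (induction A rule: infinite_finite_induct) (auto intro: lspan_0 lspan_add)

lemma lspan_gen:
  assumes fin: "finite I" and i: "i \<in> I"
  shows "g i \<in> lspan g I"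
proof -
  let ?c = "\<lambda>x. if x = i then one else 0"
  have "(\<Sum>x\<in>I. sc (?c x) (g x)) = sc (?c i) (g i) + (\<Sum>x\<in>I - {i}. sc (?c x) (g x))"
    using fin i by (simp add: sum.remove)
  also have "(\<Sum>x\<in>I - {i}. sc (?c x) (g x)) = 0" using gV by (intro sum.neutral) auto
  finally have "(\<Sum>x\<in>I. sc (?c x) (g x)) = g i" using sc_one gV i by simp
  moreover have "\<forall>x\<in>I. ?c x \<in> K" using K0 K1 by simp
  ultimately show ?thesis unfolding lspan_def by (intro CollectI exI[of _ ?c]) simp
qed

end

lemma lspan_insert:
  assumes gV: "\<And>i. i \<in> insert i0 I \<Longrightarrow> g i \<in> V" and fin: "finite I" and i0: "i0 \<notin> I"
    and v: "v \<in> lspan g (insert i0 I)"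
  shows "\<exists>a\<in>K. v - sc a (g i0) \<in> lspan g I"
proof -
  obtain c where c: "\<forall>i\<in>insert i0 I. c i \<in> K" "v = (\<Sum>i\<in>insert i0 I. sc (c i) (g i))"
    using v unfolding lspan_def by blast
  have "v - sc (c i0) (g i0) = (\<Sum>i\<in>I. sc (c i) (g i))" using c(2) fin i0 by simp
  then show ?thesis using c(1) unfolding lspan_def by auto
qed

lemma steinitz:
  assumes "finite I" "finite J" "\<And>i. i \<in> I \<Longrightarrow> g i \<in> V" "\<And>j. j \<in> J \<Longrightarrow> w j \<in> lspan g I" "indep w J"
  shows "card J \<le> card I"
  using assms
proof (induction I arbitrary: J w rule: finite_induct)
  case empty
  have w0: "\<And>j. j \<in> J \<Longrightarrow> w j = 0"
    using empty.prems(3) unfolding lspan_def by auto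
  show ?case
  proof (cases "J = {}")
    case False
    then obtain j where j: "j \<in> J" by blast
    let ?d = "\<lambda>x. if x = j then one else 0"
    have s1: "(\<Sum>x\<in>J. sc (?d x) (w x)) = 0" using w0 K1 V0 by (intro sum.neutral) simp
    have s2: "\<forall>x\<in>J. ?d x \<in> K" using K0 K1 by simp
    have imp: "\<And>d. (\<forall>j\<in>J. d j \<in> K) \<Longrightarrow> (\<Sum>j\<in>J. sc (d j) (w j)) = 0 \<Longrightarrow> \<forall>j\<in>J. d j = 0"
      using empty.prems(4) unfolding indep_def by blast
    have "\<forall>x\<in>J. ?d x = 0" by (rule imp[OF s2 s1])
    then have "?d j = 0" using j by blast
    then show ?thesis using one_nz by simp
  qed simp
next
  case (insert i0 I)
  have gV: "\<And>i. i \<in> I \<Longrightarrow> g i \<in> V" "g i0 \<in> V" using insert.prems(2) by auto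
  have wV: "\<And>j. j \<in> J \<Longrightarrow> w j \<in> V" by (rule lspan_V[OF insert.prems(2) insert.prems(3)])
  have "\<forall>j\<in>J. \<exists>a. a \<in> K \<and> w j - sc a (g i0) \<in> lspan g I"
  proof
    fix j assume "j \<in> J"
    from lspan_insert[OF insert.prems(2) insert.hyps(1,2) insert.prems(3)[OF this]]
    show "\<exists>a. a \<in> K \<and> w j - sc a (g i0) \<in> lspan g I" by blast
  qed
  from bchoice[OF this] obtain a where a0: "\<forall>j\<in>J. a j \<in> K \<and> w j - sc (a j) (g i0) \<in> lspan g I"
    by blast
  then have a: "\<And>j. j \<in> J \<Longrightarrow> a j \<in> K" "\<And>j. j \<in> J \<Longrightarrow> w j - sc (a j) (g i0) \<in> lspan g I"
    by auto
  define u where "u j = w j - sc (a j) (g i0)" for j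
  have u: "\<And>j. j \<in> J \<Longrightarrow> u j \<in> lspan g I" using a u_def by simp
  have wu: "\<And>j. j \<in> J \<Longrightarrow> w j = sc (a j) (g i0) + u j" using u_def by simp
  show ?case
  proof (cases "\<forall>j\<in>J. a j = 0")
    case True
    have "\<And>j. j \<in> J \<Longrightarrow> w j \<in> lspan g I" using wu u True gV by simp
    from insert.IH[OF insert.prems(1) gV(1) this insert.prems(4)]
    show ?thesis using insert.hyps by simp
  next
    case False
    then obtain j0 where j0: "j0 \<in> J" "a j0 \<noteq> 0" by blast
    obtain b where b: "b \<in> K" "mul b (a j0) = one" using Kinv[OF a(1)[OF j0(1)] j0(2)] by blast
    define w' where "w' j = w j - sc (mul (a j) b) (w j0)" for j
    have abK: "\<And>j. j \<in> J \<Longrightarrow> mul (a j) b \<in> K" using a(1) b(1) Kmul by blast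
    have w'span: "w' j \<in> lspan g I" if j: "j \<in> J - {j0}" for j
    proof -
      have uV: "u j \<in> V" "u j0 \<in> V" using j j0 by (auto intro!: lspan_V[where g=g and I=I, OF gV(1) u])
      have jJ: "j \<in> J" using j by simp
      have K3: "a j \<in> K" "a j0 \<in> K" "mul (a j) b \<in> K" using a(1) jJ j0(1) abK by auto
      have gsV: "sc (a j0) (g i0) \<in> V" using Vsc[OF K3(2) gV(2)] .
      have "sc (mul (a j) b) (sc (a j0) (g i0)) = sc (a j) (sc b (sc (a j0) (g i0)))"
        using sc_mul[OF K3(1) b(1) gsV] by simp
      also have "\<dots> = sc (a j) (g i0)" using sc_mul[OF b(1) K3(2) gV(2)] b(2) sc_one[OF gV(2)] by simp
      finally have e1: "sc (mul (a j) b) (sc (a j0) (g i0)) = sc (a j) (g i0)" .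
      have e2: "sc (mul (a j) b) (w j0) = sc (a j) (g i0) + sc (mul (a j) b) (u j0)"
        using wu[OF j0(1)] sc_addV[OF K3(3) gsV uV(2)] e1 by simp
      have "w' j = u j - sc (mul (a j) b) (u j0)"
        unfolding w'_def e2 wu[OF jJ] by simp
      then show ?thesis using u j j0 abK[of j] gV(1)
        by (auto intro!: lspan_diff lspan_sc)
    qed
    have indep': "indep w' (J - {j0})"
      unfolding indep_def
    proof (intro allI impI)
      fix d assume d: "(\<forall>j\<in>J - {j0}. d j \<in> K) \<and> (\<Sum>j\<in>J - {j0}. sc (d j) (w' j)) = 0"
      define e where "e = (\<Sum>j\<in>J - {j0}. mul (d j) (mul (a j) b))"
      have eK: "e \<in> K" unfolding e_def using d abK a(1) b(1) by (intro Ksum Kmul) auto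
      have "(\<Sum>j\<in>J - {j0}. sc (d j) (w' j)) = (\<Sum>j\<in>J - {j0}. sc (d j) (w j)) - (\<Sum>j\<in>J - {j0}. sc (mul (d j) (mul (a j) b)) (w j0))"
        unfolding w'_def sum_subtractf[symmetric] using d abK wV j0
        by (intro sum.cong) (auto simp: sc_diffV Vsc sc_mul)
      also have "(\<Sum>j\<in>J - {j0}. sc (mul (d j) (mul (a j) b)) (w j0)) = sc e (w j0)"
        unfolding e_def using d abK wV j0 a(1) b(1) by (subst sc_sumK) (auto intro!: Kmul)
      finally have s0: "(\<Sum>j\<in>J - {j0}. sc (d j) (w j)) - sc e (w j0) = 0" using d by simp
      define d' where "d' = d(j0 := - e)"
      have "(\<Sum>j\<in>J. sc (d' j) (w j)) = sc (- e) (w j0) + (\<Sum>j\<in>J - {j0}. sc (d j) (w j))"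
        unfolding d'_def using j0 insert.prems(1) by (simp add: sum.remove)
      also have "\<dots> = 0" using s0 eK wV j0 by (simp add: sc_uminusK)
      finally have z: "(\<Sum>j\<in>J. sc (d' j) (w j)) = 0" .
      have dK: "\<forall>j\<in>J. d' j \<in> K" using d eK Kuminus unfolding d'_def by auto
      have imp: "\<And>d. (\<forall>j\<in>J. d j \<in> K) \<Longrightarrow> (\<Sum>j\<in>J. sc (d j) (w j)) = 0 \<Longrightarrow> \<forall>j\<in>J. d j = 0"
        using insert.prems(4) unfolding indep_def by blast
      have "\<forall>j\<in>J. d' j = 0" by (rule imp[OF dK z])
      then show "\<forall>j\<in>J - {j0}. d j = 0" unfolding d'_def
      proof (intro ballI)
        fix j assume h: "\<forall>j\<in>J. (d(j0 := - e)) j = 0" and jj: "j \<in> J - {j0}"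
        then have "(d(j0 := - e)) j = 0" by blast
        then show "d j = 0" using jj by simp
      qed
    qed
    have "card (J - {j0}) \<le> card I"
      using insert.IH[OF _ gV(1) w'span indep'] insert.prems(1) by blast
    then show ?thesis using insert.hyps j0 insert.prems(1) by (simp add: card_Diff_singleton)
  qed
qed

lemma inj_surj:
  assumes fin: "finite I" and gV: "\<And>i. i \<in> I \<Longrightarrow> g i \<in> V" and Vspan: "V \<subseteq> lspan g I"
    and phiV: "\<And>v. v \<in> V \<Longrightarrow> \<phi> v \<in> V"
    and padd: "\<And>v w. v \<in> V \<Longrightarrow> w \<in> V \<Longrightarrow> \<phi> (v + w) = \<phi> v + \<phi> w"
    and hom: "\<And>a v. a \<in> K \<Longrightarrow> v \<in> V \<Longrightarrow> \<phi> (sc a v) = sc a (\<phi> v)"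
    and inj: "inj_on \<phi> V"
  shows "\<phi> ` V = V"
proof -
  have p0: "\<phi> 0 = 0" using padd[OF V0 V0] by simp
  have pum: "\<phi> (- v) = - \<phi> v" if "v \<in> V" for v
    using padd[OF that Vuminus[OF that]] p0 by (simp add: eq_neg_iff_add_eq_0 add.commute)
  have psum: "\<phi> (sum f A) = (\<Sum>x\<in>A. \<phi> (f x))" if "\<And>x. x \<in> A \<Longrightarrow> f x \<in> V" for f :: "nat \<Rightarrow> 'v" and A
    using that by (induction A rule: infinite_finite_induct) (auto simp: p0 padd Vsum)
  define P where "P k \<longleftrightarrow> (\<exists>w::nat \<Rightarrow> 'v. (\<forall>j<k. w j \<in> V) \<and> indep w {..<k})" for k :: nat
  have bound: "k \<le> card I" if "P k" for k
  proof -
    obtain w where w: "\<forall>j<k. w j \<in> V" "indep w {..<k}" using \<open>P k\<close> P_def by blast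
    have "card {..<k} \<le> card I"
      by (rule steinitz[OF fin _ gV _ w(2)]) (use w(1) Vspan in auto)
    then show ?thesis by simp
  qed
  have P0: "P 0" unfolding P_def indep_def by simp
  define k where "k = (GREATEST k. P k)"
  have Pk: "P k" unfolding k_def by (rule GreatestI_nat[where P=P and k=0 and b="card I", OF P0]) (use bound in blast)
  have kmax: "k' \<le> k" if "P k'" for k' unfolding k_def by (rule Greatest_le_nat[where P=P and b="card I", OF that]) (use bound in blast)
  obtain w where w: "\<forall>j<k. w j \<in> V" "indep w {..<k}" using Pk P_def by blast
  show ?thesis
  proof
    show "\<phi> ` V \<subseteq> V" using phiV by blast
  next
    show "V \<subseteq> \<phi> ` V"
    proof
      fix y assume yV: "y \<in> V"
      show "y \<in> \<phi> ` V"
      proof (rule ccontr)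
        assume ny: "y \<notin> \<phi> ` V"
        define w' where "w' = (\<lambda>j. \<phi> (w j))(k := y)"
        have w'V: "\<forall>j<Suc k. w' j \<in> V" using w(1) yV phiV unfolding w'_def by auto
        have "indep w' {..<Suc k}" unfolding indep_def
        proof (intro allI impI)
          fix d assume d: "(\<forall>j\<in>{..<Suc k}. d j \<in> K) \<and> (\<Sum>j\<in>{..<Suc k}. sc (d j) (w' j)) = 0"
          have dK: "\<And>j. j < Suc k \<Longrightarrow> d j \<in> K" using d by auto
          have "(\<Sum>j\<in>{..<Suc k}. sc (d j) (w' j)) = (\<Sum>j<k. sc (d j) (\<phi> (w j))) + sc (d k) y"
            unfolding w'_def by (simp add: sum.lessThan_Suc)
          then have s0: "(\<Sum>j<k. sc (d j) (\<phi> (w j))) + sc (d k) y = 0" using d by simp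
          have wV: "\<And>j. j < k \<Longrightarrow> w j \<in> V" using w(1) by blast
          have scw: "\<And>j. j < k \<Longrightarrow> sc (d j) (w j) \<in> V" using dK wV by (simp add: Vsc)
          have phisum: "\<phi> (\<Sum>j<k. sc (d j) (w j)) = (\<Sum>j<k. sc (d j) (\<phi> (w j)))"
            using scw dK wV by (subst psum) (auto simp: hom)
          show "\<forall>j\<in>{..<Suc k}. d j = 0"
          proof (cases "d k = 0")
            case True
            then have "(\<Sum>j<k. sc (d j) (\<phi> (w j))) = 0" using s0 yV by simp
            then have "\<phi> (\<Sum>j<k. sc (d j) (w j)) = \<phi> 0" using phisum p0 by simp
            then have "(\<Sum>j<k. sc (d j) (w j)) = 0"
              using inj_onD[OF inj _ Vsum V0] scw by blast
            moreover have "\<forall>j\<in>{..<k}. d j \<in> K" using dK by simp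
            moreover have imp: "\<And>d. (\<forall>j\<in>{..<k}. d j \<in> K) \<Longrightarrow> (\<Sum>j\<in>{..<k}. sc (d j) (w j)) = 0 \<Longrightarrow> \<forall>j\<in>{..<k}. d j = 0"
              using w(2) unfolding indep_def by blast
            ultimately have "\<forall>j\<in>{..<k}. d j = 0" by blast
            then show ?thesis using True by (auto simp: less_Suc_eq)
          next
            case False
            obtain b where b: "b \<in> K" "mul b (d k) = one" using Kinv[OF dK[of k] False] by auto
            define z where "z = (\<Sum>j<k. sc (mul b (d j)) (w j))"
            have zV: "z \<in> V" unfolding z_def using b dK wV by (intro Vsum Vsc Kmul) auto
            have bdK: "\<And>j. j < k \<Longrightarrow> mul b (d j) \<in> K" using b dK Kmul by simp
            have "\<phi> z = (\<Sum>j<k. sc b (sc (d j) (\<phi> (w j))))"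
              unfolding z_def using b dK wV phiV bdK
              by (subst psum) (auto intro!: sum.cong Vsc Kmul simp: hom sc_mul)
            also have "\<dots> = sc b (\<Sum>j<k. sc (d j) (\<phi> (w j)))"
              using b dK wV phiV by (subst sc_sumV) (auto intro: Vsc)
            also have "(\<Sum>j<k. sc (d j) (\<phi> (w j))) = - sc (d k) y"
              using s0 by (simp add: eq_neg_iff_add_eq_0)
            also have "sc b (- sc (d k) y) = - y"
              using b dK[of k] yV by (simp add: sc_uminusV Vsc sc_mul sc_one)
            finally have "\<phi> (- z) = y" using pum[OF zV] by simp
            then have "y \<in> \<phi> ` V" using Vuminus[OF zV] by blast
            then show ?thesis using ny by blast
          qed
        qed
        then have "P (Suc k)" unfolding P_def using w'V by blast
        then show False using kmax by fastforce
      qed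
    qed
  qed
qed

end



context skew
begin

lemma lscal_as_mm: "skew_lscal c p = mm [:c:] p" by (simp add: mm_const)

lemma monic_deg0: "lead_coeff d = 1 \<Longrightarrow> degree d = 0 \<Longrightarrow> d = [:1:]"
  by (metis degree_eq_zeroE lead_coeff_pCons(2) pCons_0_0 pCons_eq_0_iff)

lemma ideal_gen:
  assumes sub: "\<And>x y. x \<in> J \<Longrightarrow> y \<in> J \<Longrightarrow> x - y \<in> J"
    and lmul: "\<And>w x. x \<in> J \<Longrightarrow> mm w x \<in> J"
    and ne: "x0 \<in> J" "x0 \<noteq> 0"
  shows "\<exists>d\<in>J. lead_coeff d = 1 \<and> degree d \<le> degree x0 \<and> (\<forall>x\<in>J. \<exists>q. x = mm q d)"
proof -
  define P where "P n \<longleftrightarrow> (\<exists>x\<in>J. x \<noteq> 0 \<and> degree x = n)" for n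
  have "P (degree x0)" using ne P_def by blast
  then obtain n where n: "P n" "\<And>m. m < n \<Longrightarrow> \<not> P m" "n \<le> degree x0"
    by (metis exists_least_iff le_less_linear)
  then obtain d0 where d0: "d0 \<in> J" "d0 \<noteq> 0" "degree d0 = n" using P_def by blast
  define d where "d = mm [:inverse (lead_coeff d0):] d0"
  have dJ: "d \<in> J" using lmul d0 d_def by blast
  have ld: "inverse (lead_coeff d0) \<noteq> 0" using d0(2) by simp
  have dd: "degree d = n" using d0 ld unfolding d_def mm_const by (simp add: degree_lscal)
  have dl: "lead_coeff d = 1" using d0 ld dd unfolding d_def mm_const by simp
  have gen: "\<forall>x\<in>J. \<exists>q. x = mm q d"
  proof
    fix x assume xJ: "x \<in> J"
    show "\<exists>q. x = mm q d"
    proof (cases "degree d = 0")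
      case True
      then have "d = [:1:]" using monic_deg0 dl by blast
      then show ?thesis by (intro exI[of _ x]) simp
    next
      case False
      obtain q r where qr: "x = mm q d + r" "degree r < degree d" using division[OF dl, of x] False by auto
      have "r = x - mm q d" using qr by simp
      then have rJ: "r \<in> J" using sub xJ lmul dJ by simp
      have "r = 0" using n(2) rJ qr(2) dd P_def by blast
      then show ?thesis using qr by auto
    qed
  qed
  show ?thesis using dJ dl dd n(3) gen by blast
qed

end

locale skewf = skew +
  fixes f :: "'a poly"
  assumes monic: "lead_coeff f = 1" and degf: "degree f \<ge> 1"
begin

abbreviation "rm p \<equiv> skew_rmod \<sigma> \<delta> p f"
abbreviation "om g h \<equiv> Sf_mult \<sigma> \<delta> f g h"
abbreviation "S \<equiv> Sf_carrier f"

lemma f0: "f \<noteq> 0" using monic by auto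
lemma S_iff: "g \<in> S \<longleftrightarrow> degree g < degree f" by (simp add: Sf_carrier_def)
lemma om_def: "om g h = rm (mm g h)" by (simp add: Sf_mult_def)

lemma rm_deg: "degree (rm p) < degree f" using rmod_ex[OF monic degf] by blast
lemma rm_S: "rm p \<in> S" using rm_deg S_iff by blast
lemma rm_decomp: "\<exists>q. p = mm q f + rm p" using rmod_ex[OF monic degf] by blast
lemma rm_of: "degree r < degree f \<Longrightarrow> p = mm q f + r \<Longrightarrow> rm p = r" by (rule rmod_eq[OF monic])
lemma rm_id: "degree r < degree f \<Longrightarrow> rm r = r" using rm_of[of r r 0] by simp
lemma rm_idS: "r \<in> S \<Longrightarrow> rm r = r" using rm_id S_iff by blast
lemma rm_0[simp]: "rm 0 = 0" using rm_id degf by simp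

lemma rm_add: "rm (p + q) = rm p + rm q"
proof -
  obtain a b where "p = mm a f + rm p" "q = mm b f + rm q" using rm_decomp by metis
  then have "p + q = mm (a + b) f + (rm p + rm q)" by (simp add: mm_add_left algebra_simps)
  moreover have "degree (rm p + rm q) < degree f" using rm_deg by (meson degree_add_le le_less_trans less_imp_le_nat max.strict_boundedE degree_add_le_max order.strict_trans1 max_less_iff_conj)
  ultimately show ?thesis using rm_of by blast
qed
lemma rm_uminus: "rm (- p) = - rm p"
  using rm_add[of p "-p"] by (simp add: eq_neg_iff_add_eq_0 add.commute)
lemma rm_diff: "rm (p - q) = rm p - rm q"
  using rm_add[of p "-q"] rm_uminus[of q] by simp
lemma rm_lscal: "rm (skew_lscal c p) = skew_lscal c (rm p)"
proof -
  obtain a where a: "p = mm a f + rm p" using rm_decomp by metis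
  then have "skew_lscal c p = mm (skew_lscal c a) f + skew_lscal c (rm p)"
    by (metis lscal_add mm_lscal_left)
  moreover have "degree (skew_lscal c (rm p)) < degree f" using rm_deg degree_lscal_le le_less_trans by blast
  ultimately show ?thesis using rm_of by blast
qed
lemma rm_mmf: "rm (p + mm q f) = rm p"
proof -
  obtain a where "p = mm a f + rm p" using rm_decomp by metis
  then have "p + mm q f = mm (a + q) f + rm p" by (simp add: mm_add_left algebra_simps)
  then show ?thesis using rm_of rm_deg by blast
qed
lemma rm_mmf0: "rm (mm q f) = 0" using rm_mmf[of 0 q] by simp
lemma rm_zero_iff: "rm p = 0 \<longleftrightarrow> (\<exists>q. p = mm q f)"
  using rm_decomp rm_mmf0 by (metis add.right_neutral)

lemma om_S: "om g h \<in> S" unfolding om_def by (rule rm_S)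
lemma om_add_left: "om (g1 + g2) h = om g1 h + om g2 h" unfolding om_def by (simp add: mm_add_left rm_add)
lemma om_add_right: "om g (h1 + h2) = om g h1 + om g h2" unfolding om_def by (simp add: mm_add_right rm_add)
lemma om_diff_left: "om (g1 - g2) h = om g1 h - om g2 h" unfolding om_def by (simp add: mm_diff_left rm_diff)
lemma om_diff_right: "om g (h1 - h2) = om g h1 - om g h2" unfolding om_def by (simp add: mm_diff_right rm_diff)
lemma om_0_right[simp]: "om g 0 = 0" unfolding om_def by simp
lemma om_0_left[simp]: "om 0 h = 0" unfolding om_def by simp
lemma om_lscal: "om (skew_lscal c g) h = skew_lscal c (om g h)" unfolding om_def by (simp add: mm_lscal_left rm_lscal)
lemma om_one_right: "g \<in> S \<Longrightarrow> om g [:1:] = g" unfolding om_def by (simp add: rm_idS)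

lemma mm_deg_ge: "q \<noteq> 0 \<Longrightarrow> degree (mm q f) \<ge> degree f" using mm_deg[OF monic] by simp

lemma unit_not: "\<not> skew_unit \<sigma> \<delta> f"
proof
  assume "skew_unit \<sigma> \<delta> f"
  then obtain g where g: "mm g f = [:1:]" unfolding skew_unit_def by blast
  show False
  proof (cases "g = 0")
    case True then show False using g by simp
  next
    case False then have "degree (mm g f) \<ge> 1" using mm_deg_ge degf by fastforce
    then show False using g by simp
  qed
qed

lemma div_imp_irred:
  assumes "Sf_division_algebra \<sigma> \<delta> f"
  shows "skew_irreducible \<sigma> \<delta> f"
  unfolding skew_irreducible_def
proof (intro conjI unit_not notI)
  assume "\<exists>g h. f = mm g h \<and> degree g < degree f \<and> degree h < degree f"
  then obtain g h where gh: "f = mm g h" "degree g < degree f" "degree h < degree f" by blast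
  have g0: "g \<noteq> 0" and h0: "h \<noteq> 0" using gh(1) f0 by auto
  have "bij_betw (\<lambda>h. om g h) S S" using assms g0 gh(2) S_iff unfolding Sf_division_algebra_def by blast
  then have inj: "inj_on (\<lambda>h. om g h) S" by (rule bij_betw_imp_inj_on)
  have "om g h = 0" unfolding om_def using gh(1)[symmetric] rm_mmf0[of "[:1:]"] by simp
  then have "om g h = om g 0" by simp
  moreover have "h \<in> S" "0 \<in> S" using gh(3) degf S_iff by auto
  ultimately have "h = 0" using inj_onD[OF inj] by blast
  then show False using h0 by simp
qed

lemma S0: "0 \<in> S" using degf S_iff by simp
lemma S_add: "g \<in> S \<Longrightarrow> h \<in> S \<Longrightarrow> g + h \<in> S"
  unfolding S_iff by (metis degree_add_le le_less_trans less_imp_le_nat max.strict_boundedE degree_add_le_max order.strict_trans1 max_less_iff_conj)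
lemma S_uminus: "g \<in> S \<Longrightarrow> - g \<in> S" unfolding S_iff by simp
lemma S_diff: "g \<in> S \<Longrightarrow> h \<in> S \<Longrightarrow> g - h \<in> S" using S_add S_uminus by (metis diff_conv_add_uminus)
lemma S_lscal: "g \<in> S \<Longrightarrow> skew_lscal c g \<in> S" unfolding S_iff using degree_lscal_le le_less_trans by blast
lemma S_monom: "i < degree f \<Longrightarrow> monom c i \<in> S" unfolding S_iff by (metis degree_monom_le le_less_trans)
lemma S_one: "[:1:] \<in> S" unfolding S_iff using degf by simp

lemma ex_linv: "(a::'a) \<noteq> 0 \<Longrightarrow> \<exists>b. b * a = 1" by (metis left_inverse)

lemma linD: "lin (UNIV::'a set) (*) 1 S skew_lscal"
  by unfold_locales (auto simp: S0 S_add S_uminus S_lscal lscal_add2 lscal_add lscal_lscal ex_linv)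

lemma lscal_monom1: "skew_lscal c (monom 1 i) = monom c i"
  by (rule poly_eqI) simp

lemma as_monoms: "degree x < N \<Longrightarrow> x = (\<Sum>i<N. monom (coeff x i) i)"
proof -
  assume "degree x < N"
  then obtain M where M: "N = Suc M" "degree x \<le> M" by (cases N) auto
  show ?thesis unfolding M(1) lessThan_Suc_atMost using poly_as_sum_of_monoms'[OF M(2)] by simp
qed

lemma S_as_sum: "v \<in> S \<Longrightarrow> v = (\<Sum>i<degree f. skew_lscal (coeff v i) (monom 1 i))"
  unfolding lscal_monom1 using as_monoms S_iff by blast

lemma mm_sum_left: "mm (sum g A) q = (\<Sum>x\<in>A. mm (g x) q)"
  by (rule sum_comp_morphism[symmetric, where h="\<lambda>p. mm p q", unfolded o_def]) (simp_all add: mm_add_left)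
lemma rm_sum: "rm (sum g A) = (\<Sum>x\<in>A. rm (g x))"
  by (rule sum_comp_morphism[symmetric, where h="\<lambda>p. rm p", unfolded o_def]) (simp_all add: rm_add)

lemma bezout:
  assumes irr: "skew_irreducible \<sigma> \<delta> f" and h: "h \<in> S" "h \<noteq> 0"
  shows "\<exists>u v. r = mm u f + mm v h"
proof -
  define J where "J = {x. \<exists>u v. x = mm u f + mm v h}"
  have sub: "x - y \<in> J" if xy: "x \<in> J" "y \<in> J" for x y
  proof -
    obtain u v u' v' where "x = mm u f + mm v h" "y = mm u' f + mm v' h" using xy unfolding J_def by blast
    then have "x - y = mm (u - u') f + mm (v - v') h" by (simp add: mm_diff_left algebra_simps)
    then show ?thesis using J_def by blast
  qed
  have lmul: "mm w x \<in> J" if xy: "x \<in> J" for w x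
  proof -
    obtain u v where "x = mm u f + mm v h" using xy unfolding J_def by blast
    then have "mm w x = mm (mm w u) f + mm (mm w v) h" by (simp add: mm_add_right mm_assoc)
    then show ?thesis using J_def by blast
  qed
  have hJ: "h \<in> J" unfolding J_def by (intro CollectI exI[of _ 0] exI[of _ "[:1:]"]) simp
  have fJ: "f \<in> J" unfolding J_def by (intro CollectI exI[of _ "[:1:]"] exI[of _ 0]) simp
  obtain d where d: "d \<in> J" "lead_coeff d = 1" "\<forall>x\<in>J. \<exists>q. x = mm q d"
    using ideal_gen[OF sub lmul hJ h(2)] by blast
  obtain e where e: "f = mm e d" using d(3) fJ by blast
  obtain e' where e': "h = mm e' d" using d(3) hJ by blast
  have "degree d = 0"
  proof (rule ccontr)
    assume dpos: "degree d \<noteq> 0"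
    have e0: "e \<noteq> 0" using e f0 by auto
    have de: "degree f = degree e + degree d" using mm_deg[OF d(2) e0] e by simp
    show False
    proof (cases "degree d < degree f")
      case True
      then have "degree e < degree f" using de dpos by simp
      then show False using irr e True unfolding skew_irreducible_def by blast
    next
      case False
      have "e' \<noteq> 0" using e' h(2) by auto
      then have "degree h \<ge> degree d" using mm_deg[OF d(2)] e' by simp
      then show False using False h(1) S_iff by simp
    qed
  qed
  then have "d = [:1:]" using monic_deg0 d(2) by blast
  then have "mm r d \<in> J" using lmul d(1) by blast
  then show ?thesis using \<open>d = [:1:]\<close> J_def by simp
qed

lemma nozd:
  assumes irr: "skew_irreducible \<sigma> \<delta> f" and g: "g \<in> S" "g \<noteq> 0" and h: "h \<in> S" "h \<noteq> 0"
  shows "om g h \<noteq> 0"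
proof
  assume "om g h = 0"
  then obtain q0 where q0: "mm g h = mm q0 f" using rm_zero_iff om_def by metis
  define I where "I = {x. \<exists>q. mm x h = mm q f}"
  have sub: "x - y \<in> I" if xy: "x \<in> I" "y \<in> I" for x y
  proof -
    obtain q q' where "mm x h = mm q f" "mm y h = mm q' f" using xy unfolding I_def by blast
    then have "mm (x - y) h = mm (q - q') f" by (simp add: mm_diff_left)
    then show ?thesis using I_def by blast
  qed
  have lmul: "mm w x \<in> I" if xy: "x \<in> I" for w x
  proof -
    obtain q where "mm x h = mm q f" using xy unfolding I_def by blast
    then have "mm (mm w x) h = mm (mm w q) f" by (simp add: mm_assoc)
    then show ?thesis using I_def by blast
  qed
  have gI: "g \<in> I" using q0 I_def by blast
  obtain k where k: "k \<in> I" "lead_coeff k = 1" "degree k \<le> degree g" "\<forall>x\<in>I. \<exists>q. x = mm q k"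
    using ideal_gen[OF sub lmul gI g(2)] by blast
  have kf: "degree k < degree f" using k(3) g(1) S_iff by simp
  obtain qk where qk: "mm k h = mm qk f" using k(1) I_def by blast
  show False
  proof (cases "degree k = 0")
    case True
    then have "k = [:1:]" using monic_deg0 k(2) by blast
    then have "h = mm qk f" using qk by simp
    moreover have "qk \<noteq> 0" using calculation h(2) by auto
    ultimately have "degree h \<ge> degree f" using mm_deg_ge by simp
    then show False using h(1) S_iff by simp
  next
    case False
    define \<Phi> where "\<Phi> x = rm (mm x h)" for x
    have Phi_surj: "\<exists>x. degree x < degree k \<and> \<Phi> x = r" if r: "r \<in> S" for r
    proof -
      obtain u v where uv: "r = mm u f + mm v h" using bezout[OF irr h] by blast
      obtain q' x where qx: "v = mm q' k + x" "degree x < degree k" using division[OF k(2)] False by fastforce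
      have "mm v h = mm (mm q' qk) f + mm x h" using qx qk by (simp add: mm_add_left mm_assoc)
      then have "r = mm x h + mm (u + mm q' qk) f" using uv by (simp add: mm_add_left algebra_simps)
      then have "rm r = \<Phi> x" unfolding \<Phi>_def using rm_mmf by simp
      then show ?thesis using qx(2) rm_idS[OF r] by auto
    qed
    interpret D: lin "UNIV::'a set" "(*)" 1 S skew_lscal by (rule linD)
    define G where "G i = \<Phi> (monom 1 i)" for i
    have GS: "G i \<in> S" for i unfolding G_def \<Phi>_def by (rule rm_S)
    have Phi_lin: "\<Phi> x = (\<Sum>i<degree k. skew_lscal (coeff x i) (G i))" if "degree x < degree k" for x
    proof -
      have "x = (\<Sum>i<degree k. monom (coeff x i) i)"
        using that by (rule as_monoms)
      then have "\<Phi> x = (\<Sum>i<degree k. rm (mm (monom (coeff x i) i) h))"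
        unfolding \<Phi>_def by (metis mm_sum_left rm_sum)
      also have "\<dots> = (\<Sum>i<degree k. skew_lscal (coeff x i) (G i))"
      proof (rule sum.cong[OF refl])
        fix i
        have "monom (coeff x i) i = skew_lscal (coeff x i) (monom 1 i)"
          by (rule poly_eqI) simp
        then show "rm (mm (monom (coeff x i) i) h) = skew_lscal (coeff x i) (G i)"
          unfolding G_def \<Phi>_def by (simp add: mm_lscal_left rm_lscal)
      qed
      finally show ?thesis .
    qed
    define W where "W i = (monom 1 i :: 'a poly)" for i
    have Wspan: "W i \<in> D.lspan G {..<degree k}" if "i \<in> {..<degree f}" for i
    proof -
      have "W i \<in> S" unfolding W_def using that S_monom by simp
      then obtain x where x: "degree x < degree k" "\<Phi> x = W i" using Phi_surj by blast
      then show ?thesis unfolding D.lspan_def using Phi_lin[OF x(1)]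
        by (intro CollectI exI[of _ "\<lambda>i. coeff x i"]) auto
    qed
    have Windep: "D.indep W {..<degree f}"
      unfolding D.indep_def
    proof (intro allI impI)
      fix d assume d: "(\<forall>j\<in>{..<degree f}. d j \<in> UNIV) \<and> (\<Sum>j\<in>{..<degree f}. skew_lscal (d j) (W j)) = 0"
      show "\<forall>j\<in>{..<degree f}. d j = 0"
      proof
        fix j assume j: "j \<in> {..<degree f}"
        have "coeff (\<Sum>j\<in>{..<degree f}. skew_lscal (d j) (W j)) j = d j"
          using j unfolding W_def by (simp add: lscal_monom1 coeff_sum)
        then show "d j = 0" using d by simp
      qed
    qed
    have "card {..<degree f} \<le> card {..<degree k}"
      by (rule D.steinitz[OF _ _ _ Wspan Windep]) (auto simp: GS)
    then show False using kf by simp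
  qed
qed

lemma Rh_bij:
  assumes irr: "skew_irreducible \<sigma> \<delta> f" and h: "h \<in> S" "h \<noteq> 0"
  shows "bij_betw (\<lambda>g. om g h) S S"
proof -
  interpret D: lin "UNIV::'a set" "(*)" 1 S skew_lscal by (rule linD)
  have inj: "inj_on (\<lambda>g. om g h) S"
  proof (rule inj_onI)
    fix g1 g2 assume g: "g1 \<in> S" "g2 \<in> S" "om g1 h = om g2 h"
    then have "om (g1 - g2) h = 0" by (simp add: om_diff_left)
    then show "g1 = g2" using nozd[OF irr S_diff[OF g(1,2)] _ h] by auto
  qed
  have "(\<lambda>g. om g h) ` S = S"
  proof (rule D.inj_surj[where g="\<lambda>i. monom 1 i" and I="{..<degree f}"])
    show "S \<subseteq> D.lspan (\<lambda>i. monom 1 i) {..<degree f}"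
      unfolding D.lspan_def using S_as_sum by blast
  qed (auto simp: S_monom om_S om_add_left om_lscal inj)
  then show ?thesis using inj by (simp add: bij_betw_def)
qed

lemma Lg_inj:
  assumes irr: "skew_irreducible \<sigma> \<delta> f" and g: "g \<in> S" "g \<noteq> 0"
  shows "inj_on (\<lambda>h. om g h) S"
proof (rule inj_onI)
  fix h1 h2 assume h: "h1 \<in> S" "h2 \<in> S" "om g h1 = om g h2"
  then have "om g (h1 - h2) = 0" by (simp add: om_diff_right)
  then show "h1 = h2" using nozd[OF irr g S_diff[OF h(1,2)]] by auto
qed


end



context skewf
begin

lemma rm_mmf_diff: "rm (x - mm y f) = rm x" by (simp add: rm_diff rm_mmf0)

lemma om_decomp: "\<exists>q. mm v b = mm q f + om v b" unfolding om_def by (rule rm_decomp)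

lemma nucleus:
  assumes e: "mm f e = mm p f"
  shows "om (om v b) e = om v (om b e)"
proof -
  obtain q where q: "mm v b = mm q f + om v b" using om_decomp by blast
  obtain q' where q': "mm b e = mm q' f + om b e" using om_decomp by blast
  have q2: "om v b = mm v b - mm q f" using q by (metis add_diff_cancel_left')
  have q3: "om b e = mm b e - mm q' f" using q' by (metis add_diff_cancel_left')
  have "om (om v b) e = rm (mm (mm v b - mm q f) e)" unfolding q2 by (simp add: om_def)
  also have "\<dots> = rm (mm (mm v b) e - mm (mm q p) f)" by (simp add: mm_diff_left mm_assoc e)
  also have "\<dots> = rm (mm v (mm b e))" unfolding rm_mmf_diff by (simp add: mm_assoc)
  also have "\<dots> = rm (mm v (mm b e - mm q' f) + mm (mm v q') f)" by (simp add: mm_diff_right mm_assoc)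
  also have "\<dots> = om v (om b e)" unfolding rm_mmf q3 by (simp add: om_def)
  finally show ?thesis .
qed

definition Eset where "Eset = {e \<in> S. \<exists>p. mm f e = mm p f}"

lemma E_S: "e \<in> Eset \<Longrightarrow> e \<in> S" unfolding Eset_def by blast
lemma E_nuc: "e \<in> Eset \<Longrightarrow> om (om v b) e = om v (om b e)" unfolding Eset_def using nucleus by blast
lemma E0: "0 \<in> Eset" unfolding Eset_def using S0 by (auto intro: exI[of _ 0])
lemma E1: "[:1:] \<in> Eset" unfolding Eset_def using S_one by (auto intro: exI[of _ "[:1:]"])
lemma E_add: "a \<in> Eset \<Longrightarrow> b \<in> Eset \<Longrightarrow> a + b \<in> Eset"
  unfolding Eset_def using S_add by (auto simp: mm_add_right mm_add_left[symmetric])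
lemma E_uminus: "a \<in> Eset \<Longrightarrow> - a \<in> Eset"
proof -
  assume "a \<in> Eset"
  then obtain p where "a \<in> S" "mm f a = mm p f" unfolding Eset_def by blast
  then have "- a \<in> S" "mm f (- a) = mm (- p) f" using S_uminus by (auto simp: mm_uminus_right mm_uminus_left)
  then show ?thesis unfolding Eset_def by blast
qed
lemma E_om: "a \<in> Eset \<Longrightarrow> b \<in> Eset \<Longrightarrow> om a b \<in> Eset"
proof -
  assume a: "a \<in> Eset" and b: "b \<in> Eset"
  obtain pa pb where pa: "mm f a = mm pa f" and pb: "mm f b = mm pb f" using a b unfolding Eset_def by blast
  obtain q where q: "mm a b = mm q f + om a b" using om_decomp by blast
  have "mm f (om a b) = mm f (mm a b - mm q f)" using q by (metis add_diff_cancel_left')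
  also have "\<dots> = mm (mm pa pb - mm f q) f"
    by (simp add: mm_diff_right mm_diff_left mm_assoc[symmetric] pa) (simp add: mm_assoc pb)
  finally show ?thesis unfolding Eset_def using om_S by blast
qed

lemma E_inv:
  assumes irr: "skew_irreducible \<sigma> \<delta> f" and a: "a \<in> Eset" "a \<noteq> 0"
  shows "\<exists>b\<in>Eset. om a b = [:1:]"
proof -
  have aS: "a \<in> S" using a E_S by blast
  obtain pa where pa: "mm f a = mm pa f" using a unfolding Eset_def by blast
  have bij: "bij_betw (\<lambda>g. om g a) S S" using Rh_bij[OF irr aS a(2)] .
  then have "[:1:] \<in> (\<lambda>g. om g a) ` S" using S_one unfolding bij_betw_def by simp
  then obtain b where b: "b \<in> S" "om b a = [:1:]" by auto
  obtain q where q0: "mm b a = mm q f + om b a" using om_decomp[of b a] by blast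
  then have q: "mm b a = mm q f + [:1:]" using b(2) by simp
  obtain p where p: "mm f b = mm p f + rm (mm f b)" using rm_decomp by blast
  define r where "r = rm (mm f b)"
  have r2: "r = mm f b - mm p f" using p unfolding r_def by (metis add_diff_cancel_left')
  have "mm r a = mm (mm f b) a - mm (mm p f) a" unfolding r2 by (rule mm_diff_left)
  also have "\<dots> = mm (mm f q + [:1:] - mm p pa) f"
    by (simp add: mm_assoc q pa mm_add_right mm_diff_left mm_add_left)
  finally have "om r a = 0" unfolding om_def using rm_mmf0 by simp
  moreover have "r \<in> S" unfolding r_def by (rule rm_S)
  ultimately have "r = 0" using nozd[OF irr _ _ aS a(2)] by blast
  then have bE: "b \<in> Eset" using p b(1) r_def unfolding Eset_def by auto
  have "om (om a b) a = om a (om b a)" using E_nuc[OF a(1)] .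
  also have "\<dots> = a" using b(2) om_one_right[OF aS] by simp
  also have "\<dots> = om [:1:] a" unfolding om_def using rm_idS[OF aS] by simp
  finally have "om a b = [:1:]" using bij_betw_imp_inj_on[OF bij] om_S S_one by (meson inj_onD)
  then show ?thesis using bE by blast
qed

lemma linE:
  assumes irr: "skew_irreducible \<sigma> \<delta> f"
  shows "lin Eset (\<lambda>a b. om b a) [:1:] S (\<lambda>a v. om v a)"
proof unfold_locales
  fix a assume "a \<in> Eset" "a \<noteq> 0"
  then show "\<exists>b\<in>Eset. om a b = [:1:]" using E_inv[OF irr] by blast
qed (auto simp: E0 E1 E_add E_uminus E_om S0 S_add S_uminus om_S om_add_right om_add_left E_nuc om_one_right)

lemma sp_add: "(\<sigma> ^^ i) (a + b) = (\<sigma> ^^ i) a + (\<sigma> ^^ i) b" by (induction i) (simp_all add: s_add)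
lemma sp_mult: "(\<sigma> ^^ i) (a * b) = (\<sigma> ^^ i) a * (\<sigma> ^^ i) b" by (induction i) (simp_all add: s_mult)
lemma sp_0: "(\<sigma> ^^ i) 0 = 0" by (induction i) simp_all
lemma sp_sum: "(\<sigma> ^^ i) (sum g A) = (\<Sum>x\<in>A. (\<sigma> ^^ i) (g x))"
  by (rule sum_comp_morphism[symmetric, unfolded o_def]) (simp_all add: sp_add sp_0)
lemma sp_surj: "surj \<sigma> \<Longrightarrow> \<exists>a'. (\<sigma> ^^ i) a' = a"
proof (induction i arbitrary: a)
  case 0 then show ?case by simp
next
  case (Suc i)
  obtain b where "\<sigma> b = a" using Suc.prems by (metis surjD)
  obtain a' where "(\<sigma> ^^ i) a' = b" using Suc by blast
  then show ?case using \<open>\<sigma> b = a\<close> by (intro exI[of _ a']) simp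
qed

lemma Tpow_const: "degree ((T ^^ i) [:c:]) \<le> i \<and> coeff ((T ^^ i) [:c:]) i = (\<sigma> ^^ i) c"
proof (induction i)
  case 0 then show ?case by simp
next
  case (Suc i)
  let ?p = "(T ^^ i) [:c:]"
  have d: "degree (T ?p) \<le> Suc i"
    by (rule degree_le) (use Suc in \<open>auto simp: T_coeff coeff_eq_0 split: nat.splits\<close>)
  have "coeff (T ?p) (Suc i) = (\<sigma> ^^ Suc i) c" using Suc by (simp add: coeff_eq_0)
  then show ?case using d by simp
qed

lemma mm_monom_left: "mm (monom x i) q = skew_lscal x ((T ^^ i) q)"
proof (induction i arbitrary: q)
  case 0 then show ?case by (simp add: monom_0 mm_const)
next
  case (Suc i)
  have "mm (monom x (Suc i)) q = mm (monom x i) (T q)" by (simp add: monom_Suc mm_pCons)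
  then show ?case using Suc by (simp add: funpow_swap1)
qed

lemma span_E:
  fixes n :: nat and \<beta> :: "nat \<Rightarrow> 'a"
  assumes irr: "skew_irreducible \<sigma> \<delta> f" and surjs: "surj \<sigma>"
    and basis: "\<forall>d. \<exists>c. (\<forall>i<n. c i \<in> B) \<and> d = (\<Sum>i<n. \<beta> i * c i)"
    and wsi: "\<forall>b\<in>B. \<exists>d. mm f [:b:] = mm [:d:] f"
  shows "S \<subseteq> lin.lspan Eset (\<lambda>a v. om v a) (\<lambda>(i, j). monom ((\<sigma> ^^ i) (\<beta> j)) i) ({..<degree f} \<times> {..<n})"
proof -
  interpret E: lin Eset "\<lambda>a b. om b a" "[:1:]" S "\<lambda>a v. om v a" by (rule linE[OF irr])
  define G where "G = (\<lambda>(i, j). monom ((\<sigma> ^^ i) (\<beta> j)) i)"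
  define I where "I = {..<degree f} \<times> {..<n}"
  have GS: "G x \<in> S" if "x \<in> I" for x using that S_monom unfolding G_def I_def by auto
  have finI: "finite I" unfolding I_def by (intro finite_cartesian_product) simp_all
  have cE: "[:b:] \<in> Eset" if "b \<in> B" for b
    using wsi that S_iff degf unfolding Eset_def by auto
  have main: "\<forall>v. (\<forall>l\<ge>N. coeff v l = 0) \<longrightarrow> N \<le> degree f \<longrightarrow> v \<in> E.lspan G I" for N
  proof (induction N)
    case 0
    show ?case
    proof (intro allI impI)
      fix v :: "'a poly" assume "\<forall>l\<ge>0. coeff v l = 0"
      then have "v = 0" by (intro poly_eqI) simp
      then show "v \<in> E.lspan G I" using E.lspan_0[where g=G and I=I, OF GS] by simp
    qed
  next
    case (Suc N)
    show ?case
    proof (intro allI impI)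
      fix v :: "'a poly" assume v: "\<forall>l\<ge>Suc N. coeff v l = 0" and N: "Suc N \<le> degree f"
      obtain a' where a': "(\<sigma> ^^ N) a' = coeff v N" using sp_surj[OF surjs] by blast
      obtain c where c: "\<forall>j<n. c j \<in> B" "a' = (\<Sum>j<n. \<beta> j * c j)" using basis by blast
      define u where "u = (\<Sum>j<n. om (G (N, j)) [:c j:])"
      have uterm: "om (G (N, j)) [:c j:] = skew_lscal ((\<sigma> ^^ N) (\<beta> j)) ((T ^^ N) [:c j:])" for j
      proof -
        have "degree (skew_lscal ((\<sigma> ^^ N) (\<beta> j)) ((T ^^ N) [:c j:])) < degree f"
          using degree_lscal_le Tpow_const N by (meson Suc_le_lessD le_less_trans order_trans)
        then show ?thesis unfolding om_def G_def by (simp add: mm_monom_left rm_id)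
      qed
      have ucoeff: "coeff u l = (\<Sum>j<n. (\<sigma> ^^ N) (\<beta> j) * coeff ((T ^^ N) [:c j:]) l)" for l
        unfolding u_def uterm by (simp add: coeff_sum)
      have ss: "(\<Sum>j<n. (\<sigma> ^^ N) (\<beta> j) * (\<sigma> ^^ N) (c j)) = (\<sigma> ^^ N) a'"
        unfolding c(2) by (simp add: sp_sum sp_mult)
      have uN: "coeff u N = coeff v N"
        unfolding ucoeff using Tpow_const ss a' by simp
      have uhi: "coeff u l = 0" if "l > N" for l
      proof -
        have "coeff ((T ^^ N) [:c j:]) l = 0" for j
          using Tpow_const[of N "c j"] that by (intro coeff_eq_0) simp
        then show ?thesis unfolding ucoeff by simp
      qed
      have uspan: "u \<in> E.lspan G I"
        unfolding u_def
      proof (rule E.lspan_sum[where g=G and I=I, OF GS])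
        fix j assume j: "j \<in> {..<n}"
        have NI: "(N, j) \<in> I" using j N unfolding I_def by auto
        have "G (N, j) \<in> E.lspan G I" by (rule E.lspan_gen[where g=G and I=I, OF GS finI NI])
        moreover have "[:c j:] \<in> Eset" using cE c(1) j by auto
        ultimately show "om (G (N, j)) [:c j:] \<in> E.lspan G I"
          using E.lspan_sc[where g=G and I=I, OF GS] by blast
      qed
      have "\<forall>l\<ge>N. coeff (v - u) l = 0"
      proof (intro allI impI)
        fix l assume "N \<le> l"
        then consider "l = N" | "l > N" by linarith
        then show "coeff (v - u) l = 0"
        proof cases
          case 1 then show ?thesis using uN by simp
        next
          case 2 then show ?thesis using uhi[OF 2] v by (simp add: Suc_le_eq)
        qed
      qed
      then have "v - u \<in> E.lspan G I" using Suc.IH N by simp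
      then have "(v - u) + u \<in> E.lspan G I" using uspan E.lspan_add[where g=G and I=I, OF GS] by blast
      then show "v \<in> E.lspan G I" by simp
    qed
  qed
  show ?thesis
  proof
    fix v assume "v \<in> S"
    then have "\<forall>l\<ge>degree f. coeff v l = 0" by (auto simp: S_iff intro!: coeff_eq_0)
    then have "v \<in> E.lspan G I" using main[of "degree f"] by blast
    then show "v \<in> E.lspan (\<lambda>(i, j). monom ((\<sigma> ^^ i) (\<beta> j)) i) ({..<degree f} \<times> {..<n})"
      unfolding G_def I_def .
  qed
qed

lemma irred_imp_div:
  fixes n :: nat and \<beta> :: "nat \<Rightarrow> 'a"
  assumes irr: "skew_irreducible \<sigma> \<delta> f" and surjs: "surj \<sigma>"
    and basis: "\<forall>d. \<exists>c. (\<forall>i<n. c i \<in> B) \<and> d = (\<Sum>i<n. \<beta> i * c i)"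
    and wsi: "\<forall>b\<in>B. \<exists>d. mm f [:b:] = mm [:d:] f"
  shows "Sf_division_algebra \<sigma> \<delta> f"
  unfolding Sf_division_algebra_def
proof (intro ballI impI conjI)
  fix g assume g: "g \<in> S" "g \<noteq> 0"
  show "bij_betw (\<lambda>h. om h g) S S" using Rh_bij[OF irr g] .
  interpret E: lin Eset "\<lambda>a b. om b a" "[:1:]" S "\<lambda>a v. om v a" by (rule linE[OF irr])
  have inj: "inj_on (\<lambda>h. om g h) S" using Lg_inj[OF irr g] .
  define G where "G = (\<lambda>(i, j). monom ((\<sigma> ^^ i) (\<beta> j)) i)"
  define I where "I = {..<degree f} \<times> {..<n}"
  have finI: "finite I" unfolding I_def by (intro finite_cartesian_product) simp_all
  have GS: "G x \<in> S" if "x \<in> I" for x using that S_monom unfolding G_def I_def by auto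
  have sp: "S \<subseteq> E.lspan G I" unfolding G_def I_def by (rule span_E[OF irr surjs basis wsi])
  have hom: "om g (om v a) = om (om g v) a" if "a \<in> Eset" for a v using E_nuc[OF that] by simp
  have phiV: "\<And>v. v \<in> S \<Longrightarrow> om g v \<in> S" by (rule om_S)
  have padd: "\<And>v w. v \<in> S \<Longrightarrow> w \<in> S \<Longrightarrow> om g (v + w) = om g v + om g w" by (rule om_add_right)
  have hom': "\<And>a v. a \<in> Eset \<Longrightarrow> v \<in> S \<Longrightarrow> om g (om v a) = om (om g v) a" using hom by blast
  have "(\<lambda>h. om g h) ` S = S"
    by (rule E.inj_surj[where g=G and I=I and \<phi>="\<lambda>h. om g h", OF finI GS sp phiV padd hom' inj])
  then show "bij_betw (\<lambda>h. om g h) S S" using inj by (simp add: bij_betw_def)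
qed

end

theorem mainTheorem9:
  fixes \<sigma> \<delta> :: "'a::division_ring \<Rightarrow> 'a"
  assumes "ring_auto \<sigma>"
    and "left_sigma_derivation \<sigma> \<delta>"
  shows "(\<forall>(B::'a set) (f::'a poly).
            subring B \<and> free_right_module_fin_rank B \<and> monic_skew f \<and> degree f \<ge> 2 \<and>
            weak_semi_invariant \<sigma> \<delta> B f \<longrightarrow>
            (Sf_division_algebra \<sigma> \<delta> f \<longleftrightarrow> skew_irreducible \<sigma> \<delta> f)) \<and>
         (\<forall>g::'a poly. monic_skew g \<and> degree g \<ge> 2 \<and> right_semi_invariant \<sigma> \<delta> g \<longrightarrow>
              (Sf_division_algebra \<sigma> \<delta> g \<longleftrightarrow> skew_irreducible \<sigma> \<delta> g))"
proof -
  have endo: "ring_endo \<sigma>" and bijs: "bij \<sigma>" using assms(1) unfolding ring_auto_def by auto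
  interpret skew \<sigma> \<delta> using endo bij_is_inj[OF bijs] assms(2) by unfold_locales
  have surjs: "surj \<sigma>" using bijs by (rule bij_is_surj)
  have first: "\<forall>(B::'a set) (f::'a poly).
            subring B \<and> free_right_module_fin_rank B \<and> monic_skew f \<and> degree f \<ge> 2 \<and>
            weak_semi_invariant \<sigma> \<delta> B f \<longrightarrow>
            (Sf_division_algebra \<sigma> \<delta> f \<longleftrightarrow> skew_irreducible \<sigma> \<delta> f)"
  proof (intro allI impI)
    fix B :: "'a set" and f :: "'a poly"
    assume H: "subring B \<and> free_right_module_fin_rank B \<and> monic_skew f \<and> degree f \<ge> 2 \<and>
            weak_semi_invariant \<sigma> \<delta> B f"
    interpret skewf \<sigma> \<delta> f using H unfolding monic_skew_def by unfold_locales auto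
    obtain n :: nat and \<beta> :: "nat \<Rightarrow> 'a" where
      nb: "\<forall>d. \<exists>!c. (\<forall>i<n. c i \<in> B) \<and> (\<forall>i\<ge>n. c i = 0) \<and> d = (\<Sum>i<n. \<beta> i * c i)"
    proof -
      have fr: "free_right_module_fin_rank B" using H by blast
      then show ?thesis unfolding free_right_module_fin_rank_def using that by (elim exE) blast
    qed
    have basis: "\<forall>d. \<exists>c. (\<forall>i<n. c i \<in> B) \<and> d = (\<Sum>i<n. \<beta> i * c i)"
    proof
      fix d
      have "\<exists>c. (\<forall>i<n. c i \<in> B) \<and> (\<forall>i\<ge>n. c i = 0) \<and> d = (\<Sum>i<n. \<beta> i * c i)"
        using spec[OF nb, of d] by (rule ex1_implies_ex)
      then show "\<exists>c. (\<forall>i<n. c i \<in> B) \<and> d = (\<Sum>i<n. \<beta> i * c i)" by blast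
    qed
    have wsi: "\<forall>b\<in>B. \<exists>d. mm f [:b:] = mm [:d:] f" using H unfolding weak_semi_invariant_def by blast
    show "Sf_division_algebra \<sigma> \<delta> f \<longleftrightarrow> skew_irreducible \<sigma> \<delta> f"
      using div_imp_irred irred_imp_div[OF _ surjs basis wsi] by blast
  qed
  have subU: "subring (UNIV::'a set)" unfolding subring_def by simp
  have freeU: "free_right_module_fin_rank (UNIV::'a set)"
    unfolding free_right_module_fin_rank_def
  proof (intro exI[of _ "1::nat"] exI[of _ "\<lambda>_. (1::'a)"] allI)
    fix d :: 'a
    show "\<exists>!c::nat \<Rightarrow> 'a. (\<forall>i<1. c i \<in> UNIV) \<and> (\<forall>i\<ge>1. c i = 0) \<and> d = (\<Sum>i<1. 1 * c i)"
    proof -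
      let ?c = "\<lambda>i::nat. if i = 0 then d else 0"
      have P: "(\<forall>i<(1::nat). ?c i \<in> UNIV) \<and> (\<forall>i\<ge>(1::nat). ?c i = 0) \<and> d = (\<Sum>i<(1::nat). 1 * ?c i)" by simp
      have U: "c = ?c" if c: "(\<forall>i<(1::nat). c i \<in> UNIV) \<and> (\<forall>i\<ge>(1::nat). c i = 0) \<and> d = (\<Sum>i<(1::nat). 1 * c i)" for c :: "nat \<Rightarrow> 'a"
      proof
        fix i show "c i = ?c i" using c by (cases i) auto
      qed
      show ?thesis unfolding Ex1_def by (rule exI[of _ ?c]) (use P U in blast)
    qed
  qed
  have second: "\<forall>g::'a poly. monic_skew g \<and> degree g \<ge> 2 \<and> right_semi_invariant \<sigma> \<delta> g \<longrightarrow>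
              (Sf_division_algebra \<sigma> \<delta> g \<longleftrightarrow> skew_irreducible \<sigma> \<delta> g)"
    using first subU freeU unfolding right_semi_invariant_def by blast
  show ?thesis using first second by blast
qed

end
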